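(* For every $k\in\mathbb{N}$, the limit $\tau_k^*:=\lim_{n\to\infty}\tau_{n,k}$ exists and $$\tau_k^*=\Gamma(\nu+1)\Big(\frac{j_{\nu+1,1}}{2}\Big)^{-\nu}\,|J_\nu(j_{\nu+1,1})|,\qquad \nu=k-\tfrac12,$$ where $J_\nu$ is the Bessel function of the first kind of order $\nu$ and $j_{\nu+1,1}$ is the first positive zero of $J_{\nu+1}$.
   Context: $T_n$ denotes the Chebyshev polynomial of the first kind of degree $n$, $T_n(\cos\theta)=\cos n\theta$. For integers $n\ge k+2$, $k\ge 1$, let $\omega_{n,k}$ be the rightmost (largest) zero of $T_n^{(k+1)}$ and define $\tau_{n,k}:=|T_n^{(k)}(\omega_{n,k})|/T_n^{(k)}(1)$. *)

theory Defs
  imports "HOL-Analysis.Analysis" "HOL-Computational_Algebra.Polynomial"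
begin

fun cheb :: "nat \<Rightarrow> real poly" where
  "cheb 0 = 1"
| "cheb (Suc 0) = [:0, 1:]"
| "cheb (Suc (Suc n)) = [:0, 2:] * cheb (Suc n) - cheb n"

definition cheb_deriv :: "nat \<Rightarrow> nat \<Rightarrow> real poly" where
  "cheb_deriv n k = (pderiv ^^ k) (cheb n)"

definition omega :: "nat \<Rightarrow> nat \<Rightarrow> real" where
  "omega n k = Max {x. poly (cheb_deriv n (k + 1)) x = 0}"

definition tau :: "nat \<Rightarrow> nat \<Rightarrow> real" where
  "tau n k = \<bar>poly (cheb_deriv n k) (omega n k)\<bar> / poly (cheb_deriv n k) 1"

text \<open>Bessel function of the first kind of real order nu, for x > 0, by its power series.\<close>
definition besselJ :: "real \<Rightarrow> real \<Rightarrow> real" where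
  "besselJ \<nu> x = (\<Sum>m. (-1) ^ m / (fact m * Gamma (real m + \<nu> + 1)) * (x / 2) powr (2 * real m + \<nu>))"

definition first_pos_zero :: "real \<Rightarrow> real" where
  "first_pos_zero \<nu> = (THE j. 0 < j \<and> besselJ \<nu> j = 0 \<and> (\<forall>y. 0 < y \<and> y < j \<longrightarrow> besselJ \<nu> y \<noteq> 0))"

end

theory Submission
  imports Defs
begin

lemma cheb_cos: "poly (cheb n) (cos t) = cos (real n * t)"
proof (induction n rule: cheb.induct)
  case 1 then show ?case by simp
next
  case 2 then show ?case by simp
next
  case (3 n)
  define a where "a = real (Suc n) * t"
  have a: "cos (real (Suc (Suc n)) * t) = cos (a + t)"
    by (simp add: a_def algebra_simps)
  have b: "cos (real n * t) = cos (a - t)"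
    by (simp add: a_def algebra_simps)
  have c: "cos (a + t) = 2 * cos t * cos a - cos (a - t)"
    by (simp add: cos_add cos_diff algebra_simps)
  have "poly (cheb (Suc (Suc n))) (cos t) = 2 * cos t * poly (cheb (Suc n)) (cos t) - poly (cheb n) (cos t)"
    by simp
  then show ?case using 3 unfolding a b c by (simp add: a_def)
qed

lemma degree_cheb: "degree (cheb n) \<le> n"
proof (induction n rule: cheb.induct)
  case (3 n)
  have "degree ([:0, 2:] * cheb (Suc n)) \<le> Suc (Suc n)"
    using degree_mult_le[of "[:0,2:]" "cheb (Suc n)"] 3 by simp
  then show ?case using 3 degree_diff_le by (simp add: degree_diff_le)
qed auto

lemma cheb_deriv_Suc: "cheb_deriv n (Suc k) = pderiv (cheb_deriv n k)"
  by (simp add: cheb_deriv_def)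

lemma cheb_deriv_0: "cheb_deriv n 0 = cheb n"
  by (simp add: cheb_deriv_def)

lemma funpow_pderiv_0: "(pderiv ^^ j) (0::real poly) = 0"
  by (induction j) auto

lemma funpow_pderiv_deg: "degree (p::real poly) < j \<Longrightarrow> (pderiv ^^ j) p = 0"
proof (induction j arbitrary: p)
  case 0 then show ?case by simp
next
  case (Suc j)
  have e: "(pderiv ^^ Suc j) p = (pderiv ^^ j) (pderiv p)"
    by (simp add: funpow_Suc_right del: funpow.simps)
  show ?case
  proof (cases "degree p = 0")
    case True
    then have "pderiv p = 0" by (simp add: pderiv_eq_0_iff)
    then show ?thesis using e funpow_pderiv_0 by simp
  next
    case False
    then have "degree (pderiv p) < j" using Suc.prems by (simp add: degree_pderiv)
    then show ?thesis using e Suc.IH by simp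
  qed
qed

lemma cheb_deriv_zero: "n < j \<Longrightarrow> cheb_deriv n j = 0"
  unfolding cheb_deriv_def using degree_cheb[of n] by (intro funpow_pderiv_deg) simp

lemma ode_trig:
  fixes t :: real
  shows "(sin t)^2 * poly (pderiv (pderiv (cheb n))) (cos t) - cos t * poly (pderiv (cheb n)) (cos t)
          + (real n)^2 * poly (cheb n) (cos t) = 0"
proof -
  let ?T = "cheb n"
  have H1: "poly (pderiv ?T) (cos s) * sin s = real n * sin (real n * s)" for s
  proof -
    have d1: "((\<lambda>s. poly ?T (cos s)) has_real_derivative poly (pderiv ?T) (cos s) * (- sin s)) (at s)"
      by (rule DERIV_chain2[OF poly_DERIV DERIV_cos])
    have d2: "((\<lambda>s. poly ?T (cos s)) has_real_derivative - sin (real n * s) * real n) (at s)"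
      unfolding cheb_cos by (auto intro!: derivative_eq_intros)
    from DERIV_unique[OF d1 d2] show ?thesis by simp
  qed
  have d3: "((\<lambda>s. poly (pderiv ?T) (cos s) * sin s) has_real_derivative
      poly (pderiv (pderiv ?T)) (cos t) * (- sin t) * sin t + poly (pderiv ?T) (cos t) * cos t) (at t)"
    by (rule DERIV_mult[OF DERIV_chain2[OF poly_DERIV DERIV_cos] DERIV_sin, THEN DERIV_cong]) simp
  have d4: "((\<lambda>s. poly (pderiv ?T) (cos s) * sin s) has_real_derivative
      real n * (cos (real n * t) * real n)) (at t)"
    unfolding H1 by (auto intro!: derivative_eq_intros)
  from DERIV_unique[OF d3 d4] show ?thesis
    unfolding cheb_cos by (simp add: power2_eq_square algebra_simps)
qed

lemma cheb_deriv_DERIV [derivative_intros]: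
  "((\<lambda>x. poly (cheb_deriv n j) x) has_real_derivative poly (cheb_deriv n (Suc j)) x) (at x)"
  unfolding cheb_deriv_Suc by (rule poly_DERIV)

lemma ode0: "(1 - x^2) * poly (cheb_deriv n 2) x - x * poly (cheb_deriv n 1) x
   + (real n)^2 * poly (cheb_deriv n 0) x = 0"
proof -
  define Q where "Q = [:1,0,-1:] * pderiv (pderiv (cheb n)) - [:0,1:] * pderiv (cheb n) + smult ((real n)^2) (cheb n)"
  have pQ: "poly Q y = (1 - y^2) * poly (pderiv (pderiv (cheb n))) y - y * poly (pderiv (cheb n)) y
     + (real n)^2 * poly (cheb n) y" for y
    by (simp add: Q_def power2_eq_square algebra_simps)
  have "{-1..1} \<subseteq> {y. poly Q y = 0}"
  proof
    fix y :: real assume y: "y \<in> {-1..1}"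
    define t where "t = arccos y"
    have cy: "cos t = y" using y by (simp add: t_def cos_arccos)
    have sy: "(sin t)^2 = 1 - y^2" using y by (simp add: t_def sin_arccos abs_square_le_1 abs_le_iff)
    show "y \<in> {y. poly Q y = 0}"
      using ode_trig[of t n] unfolding pQ cy sy by simp
  qed
  moreover have "infinite {-1..(1::real)}" by simp
  ultimately have "Q = 0" using poly_roots_finite finite_subset by blast
  then show ?thesis using pQ[of x] by (simp add: cheb_deriv_def numeral_2_eq_2)
qed

lemma ode_k: "(1 - x^2) * poly (cheb_deriv n (m+2)) x - (2 * real m + 1) * x * poly (cheb_deriv n (m+1)) x
   + ((real n)^2 - (real m)^2) * poly (cheb_deriv n m) x = 0"
proof (induction m arbitrary: x)
  case 0 then show ?case using ode0[of x n] by (simp add: numeral_2_eq_2)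
next
  case (Suc m)
  have d: "((\<lambda>x. (1 - x^2) * poly (cheb_deriv n (m+2)) x - (2 * real m + 1) * x * poly (cheb_deriv n (m+1)) x
   + ((real n)^2 - (real m)^2) * poly (cheb_deriv n m) x) has_real_derivative
     (1 - x^2) * poly (cheb_deriv n (Suc m+2)) x - (2 * real (Suc m) + 1) * x * poly (cheb_deriv n (Suc m+1)) x
   + ((real n)^2 - (real (Suc m))^2) * poly (cheb_deriv n (Suc m)) x) (at x)"
    by (auto intro!: derivative_eq_intros simp: power2_eq_square algebra_simps)
  have d0: "((\<lambda>x. (1 - x^2) * poly (cheb_deriv n (m+2)) x - (2 * real m + 1) * x * poly (cheb_deriv n (m+1)) x
   + ((real n)^2 - (real m)^2) * poly (cheb_deriv n m) x) has_real_derivative 0) (at x)"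
    unfolding Suc.IH by simp
  from DERIV_unique[OF d d0] show ?case .
qed

definition chebD :: "nat \<Rightarrow> nat \<Rightarrow> real" where
  "chebD n m = poly (cheb_deriv n m) 1"

lemma chebD_formula: "chebD n m = (\<Prod>i<m. ((real n)^2 - (real i)^2) / (2 * real i + 1))"
proof (induction m)
  case 0
  have "poly (cheb n) (cos 0) = 1" unfolding cheb_cos by simp
  then show ?case by (simp add: chebD_def cheb_deriv_0)
next
  case (Suc m)
  have "(2 * real m + 1) * chebD n (Suc m) = ((real n)^2 - (real m)^2) * chebD n m"
    using ode_k[of 1 n m] unfolding chebD_def by (simp add: Suc3_eq_add_3 add.commute)
  then have "chebD n (Suc m) = ((real n)^2 - (real m)^2) / (2 * real m + 1) * chebD n m"
    by (simp add: field_simps add_pos_pos)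
  then show ?case using Suc by (simp add: mult.commute)
qed

lemma chebD_nonneg: "0 \<le> chebD n m"
proof (cases "m \<le> n")
  case True
  show ?thesis unfolding chebD_formula
  proof (rule prod_nonneg)
    fix i assume "i \<in> {..<m}"
    then have "real i \<le> real n" using True by simp
    then have "(real i)^2 \<le> (real n)^2" by (simp add: power_mono)
    then show "0 \<le> ((real n)^2 - (real i)^2) / (2 * real i + 1)" by simp
  qed
next
  case False
  then have "n \<in> {..<m}" by simp
  then have "(\<Prod>i<m. ((real n)^2 - (real i)^2) / (2 * real i + 1)) = 0"
    by (intro prod_zero) auto
  then show ?thesis unfolding chebD_formula by (metis order_refl)
qed

lemma chebD_pos: "m \<le> n \<Longrightarrow> 0 < chebD n m"
  unfolding chebD_formula
proof (rule prod_pos)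
  fix i assume "m \<le> n" "i \<in> {..<m}"
  then have "real i < real n" by simp
  then have "(real i)^2 < (real n)^2" by (simp add: power_strict_mono)
  then show "0 < ((real n)^2 - (real i)^2) / (2 * real i + 1)" by simp
qed

lemma cheb_taylor: "poly (cheb_deriv n k) x = (\<Sum>m<n+1. chebD n (k+m) / fact m * (x-1)^m)"
proof -
  define diff where "diff m h = poly (cheb_deriv n (k+m)) (1+h)" for m h
  have "\<forall>m h. DERIV (diff m) h :> diff (Suc m) h"
  proof (intro allI)
    fix m h
    have "((\<lambda>h. poly (cheb_deriv n (k+m)) (1+h)) has_real_derivative poly (cheb_deriv n (Suc (k+m))) (1+h) * 1) (at h)"
      by (rule DERIV_chain2[OF cheb_deriv_DERIV]) (auto intro!: derivative_eq_intros)
    then show "DERIV (diff m) h :> diff (Suc m) h" by (simp add: diff_def[abs_def])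
  qed
  from Maclaurin_all_le[OF refl this, of "x-1" "n+1"] obtain t where
    "diff 0 (x-1) = (\<Sum>m<n+1. diff m 0 / fact m * (x-1)^m) + diff (n+1) t / fact (n+1) * (x-1)^(n+1)"
    by blast
  moreover have "diff (n+1) t = 0" by (simp add: diff_def cheb_deriv_zero)
  ultimately show ?thesis by (simp add: diff_def chebD_def)
qed

lemma cheb_deriv_pos: assumes "k \<le> n" "1 \<le> x" shows "0 < poly (cheb_deriv n k) x"
proof -
  have "chebD n (k+0) / fact 0 * (x-1)^0 \<le> (\<Sum>m<n+1. chebD n (k+m) / fact m * (x-1)^m)"
    by (rule member_le_sum) (use assms chebD_nonneg in auto)
  then show ?thesis unfolding cheb_taylor using chebD_pos[OF assms(1)] by simp
qed

lemma gen_rolle: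
  fixes p :: "real poly"
  shows "(\<forall>i<r. a i < a (Suc i)) \<Longrightarrow> (\<forall>i\<le>r. poly p (a i) = 0) \<Longrightarrow>
     \<exists>x. a 0 \<le> x \<and> x \<le> a r \<and> poly ((pderiv^^r) p) x = 0"
proof (induction r arbitrary: p a)
  case 0 then show ?case by auto
next
  case (Suc r)
  have "\<forall>i. \<exists>b. i \<le> r \<longrightarrow> a i < b \<and> b < a (Suc i) \<and> poly (pderiv p) b = 0"
  proof (intro allI)
    fix i show "\<exists>b. i \<le> r \<longrightarrow> a i < b \<and> b < a (Suc i) \<and> poly (pderiv p) b = 0"
    proof (cases "i \<le> r")
      case True
      then have lt: "a i < a (Suc i)" using Suc.prems by simp
      from poly_MVT[OF lt, of p] obtain b where b: "a i < b" "b < a (Suc i)"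
        "poly p (a (Suc i)) - poly p (a i) = (a (Suc i) - a i) * poly (pderiv p) b" by blast
      have "poly p (a (Suc i)) = 0" "poly p (a i) = 0" using Suc.prems True by auto
      with b lt show ?thesis by auto
    qed auto
  qed
  then obtain b where b: "\<And>i. i \<le> r \<Longrightarrow> a i < b i \<and> b i < a (Suc i) \<and> poly (pderiv p) (b i) = 0"
    by metis
  have "\<forall>i<r. b i < b (Suc i)"
  proof (intro allI impI)
    fix i assume "i < r"
    then show "b i < b (Suc i)" using b[of i] b[of "Suc i"] by simp
  qed
  moreover have "\<forall>i\<le>r. poly (pderiv p) (b i) = 0" using b by simp
  ultimately obtain x where x: "b 0 \<le> x" "x \<le> b r" "poly ((pderiv^^r) (pderiv p)) x = 0"
    using Suc.IH by blast
  have "(pderiv ^^ Suc r) p = (pderiv ^^ r) (pderiv p)"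
    by (simp add: funpow_Suc_right del: funpow.simps)
  moreover have "a 0 < b 0" "b r < a (Suc r)" using b[of 0] b[of r] by auto
  ultimately show ?case using x by (intro exI[of _ x]) auto
qed


lemma cos_taylor4: fixes t :: real assumes "0 \<le> t" shows "\<bar>(1 - cos t) - t^2/2\<bar> \<le> t^4/24"
proof (cases "t = 0")
  case False
  with assms have "t > 0" by simp
  from Maclaurin_cos_expansion2[OF this, of 4] obtain s where
    s: "cos t = (\<Sum>m<4. cos_coeff m * t ^ m) + cos (s + 1/2 * real 4 * pi) / fact 4 * t ^ 4" by force
  have "(\<Sum>m<4. cos_coeff m * t ^ m) = 1 - t^2/2"
    by (simp add: numeral_eq_Suc cos_coeff_def) presburger
  moreover have "cos (s + 1/2 * real 4 * pi) = cos s"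
    using cos_periodic[of s] by simp
  moreover have "fact 4 = (24::real)" by (simp add: numeral_eq_Suc)
  ultimately have "cos t = 1 - t^2/2 + cos s / 24 * t^4" using s by simp
  then have "(1 - cos t) - t^2/2 = - (cos s * t^4 / 24)" by simp
  moreover have "\<bar>cos s * t^4\<bar> \<le> t^4" using abs_cos_le_one[of s]
    by (simp add: abs_mult mult_left_le_one_le)
  ultimately show ?thesis by simp
qed simp

definition cc :: "nat \<Rightarrow> nat \<Rightarrow> real" where
  "cc k m = (\<Prod>i<m. 1 / (2 * real (k+i) + 1))"
definition aa :: "nat \<Rightarrow> nat \<Rightarrow> real" where
  "aa k m = cc k m * (-1/2)^m / fact m"
definition PP :: "nat \<Rightarrow> real \<Rightarrow> real" where
  "PP k w = (\<Sum>m. aa k m * w^m)"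
definition LL :: "nat \<Rightarrow> real \<Rightarrow> real" where
  "LL k z = PP k (z^2)"
definition ee :: "nat \<Rightarrow> nat \<Rightarrow> nat \<Rightarrow> real" where
  "ee n k m = (\<Prod>i<m. 1 - (real (k+i))^2 / (real n)^2)"
definition ss :: "nat \<Rightarrow> real \<Rightarrow> real" where
  "ss n z = (real n)^2 * (1 - cos (z / real n))"
definition NN :: "nat \<Rightarrow> nat \<Rightarrow> real \<Rightarrow> real" where
  "NN n k z = poly (cheb_deriv n k) (cos (z / real n)) / chebD n k"
definition tt :: "nat \<Rightarrow> nat \<Rightarrow> nat \<Rightarrow> real \<Rightarrow> real" where
  "tt n k m z = ee n k m * cc k m * (- ss n z)^m / fact m"

lemma chebD_shift: assumes "1 \<le> n"
  shows "chebD n (k+m) = chebD n k * ((real n)^2)^m * ee n k m * cc k m"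
proof (induction m)
  case 0 then show ?case by (simp add: ee_def cc_def)
next
  case (Suc m)
  have h: "(real n)^2 * (1 - (real (k+m))^2 / (real n)^2) = (real n)^2 - (real (k+m))^2"
    using assms by (simp add: field_simps)
  have "chebD n (k + Suc m) = chebD n (k+m) * (((real n)^2 - (real (k+m))^2) / (2 * real (k+m) + 1))"
    unfolding chebD_formula by simp
  also have "\<dots> = chebD n k * ((real n)^2)^m * ee n k m * cc k m *
      (((real n)^2 - (real (k+m))^2) / (2 * real (k+m) + 1))" using Suc by simp
  also have "\<dots> = chebD n k * ((real n)^2)^m * ee n k m * cc k m *
      ((real n)^2 * (1 - (real (k+m))^2 / (real n)^2) / (2 * real (k+m) + 1))"
    using h by simp
  also have "\<dots> = chebD n k * ((real n)^2)^(Suc m) * ee n k (Suc m) * cc k (Suc m)"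
    by (simp add: ee_def cc_def mult_ac)
  finally show ?case .
qed

lemma NN_sum: assumes "1 \<le> n" "k \<le> n"
  shows "NN n k z = (\<Sum>m<n+1. tt n k m z)"
proof -
  have pos: "chebD n k > 0" using chebD_pos assms by simp
  have "NN n k z = (\<Sum>m<n+1. chebD n (k+m) / fact m * (cos (z / real n) - 1)^m) / chebD n k"
    unfolding NN_def cheb_taylor ..
  also have "\<dots> = (\<Sum>m<n+1. chebD n (k+m) / fact m * (cos (z / real n) - 1)^m / chebD n k)"
    by (rule sum_divide_distrib)
  also have "\<dots> = (\<Sum>m<n+1. tt n k m z)"
  proof (rule sum.cong[OF refl])
    fix m
    have "((real n)^2)^m * (cos (z / real n) - 1)^m = (- ss n z)^m"
      by (simp add: ss_def power_mult_distrib[symmetric] algebra_simps)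
    then show "chebD n (k+m) / fact m * (cos (z / real n) - 1)^m / chebD n k = tt n k m z"
      unfolding chebD_shift[OF assms(1)] tt_def using pos
      by (simp add: field_simps)
  qed
  finally show ?thesis .
qed

lemma ee_zero: assumes "1 \<le> n" "k \<le> n" "n < k + m" shows "ee n k m = 0"
  unfolding ee_def
proof (rule prod_zero)
  show "\<exists>i\<in>{..<m}. 1 - (real (k+i))^2 / (real n)^2 = 0"
    using assms by (intro bexI[of _ "n - k"]) auto
qed auto

lemma NN_suminf: assumes "1 \<le> n" "k \<le> n"
  shows "NN n k z = suminf (\<lambda>m. tt n k m z)" "summable (\<lambda>m. tt n k m z)"
proof -
  have z: "\<forall>m. m \<notin> {..<n+1} \<longrightarrow> tt n k m z = 0"
    using ee_zero[OF assms] by (auto simp: tt_def)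
  show "NN n k z = suminf (\<lambda>m. tt n k m z)"
    unfolding NN_sum[OF assms] using z by (subst suminf_finite[of "{..<n+1}"]) auto
  show "summable (\<lambda>m. tt n k m z)"
    using z by (intro summable_finite[of "{..<n+1}"]) auto
qed

lemma ee_bound: assumes "1 \<le> n" "k \<le> n" shows "\<bar>ee n k m\<bar> \<le> 1"
proof (cases "n < k + m")
  case True then show ?thesis using ee_zero[OF assms] by simp
next
  case False
  have f: "0 \<le> 1 - (real (k+i))^2 / (real n)^2 \<and> 1 - (real (k+i))^2 / (real n)^2 \<le> 1" if "i < m" for i
  proof -
    have "real (k+i) \<le> real n" using False that by simp
    then have "(real (k+i))^2 \<le> (real n)^2" by (intro power_mono) auto
    then show ?thesis using assms by (simp add: field_simps)
  qed
  have "0 \<le> ee n k m" unfolding ee_def by (rule prod_nonneg) (use f in auto)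
  moreover have "ee n k m \<le> 1" unfolding ee_def by (rule prod_le_1) (use f in auto)
  ultimately show ?thesis by simp
qed

lemma cc_bound: "0 \<le> cc k m" "cc k m \<le> 1"
  unfolding cc_def by (auto intro!: prod_nonneg prod_le_1)

lemma aa_bound: "\<bar>aa k m * w^m\<bar> \<le> inverse (fact m) * (\<bar>w\<bar>/2)^m"
proof -
  have "\<bar>aa k m * w^m\<bar> = cc k m * (\<bar>w\<bar>/2)^m / fact m"
    using cc_bound[of k m] by (simp add: aa_def abs_mult power_abs power_divide)
  also have "\<dots> \<le> 1 * (\<bar>w\<bar>/2)^m / fact m"
    using cc_bound[of k m] by (intro divide_right_mono mult_right_mono) auto
  finally show ?thesis by (simp add: field_simps)
qed

lemma aa_summable: "summable (\<lambda>m. aa k m * w^m)"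
  by (rule summable_comparison_test'[OF summable_exp[of "\<bar>w\<bar>/2"]]) (use aa_bound in auto)

lemma pow_diff_bound:
  fixes x y Q :: real
  assumes "\<bar>x\<bar> \<le> Q" "\<bar>y\<bar> \<le> Q"
  shows "\<bar>x^m - y^m\<bar> \<le> real m * Q^(m-1) * \<bar>x - y\<bar>"
proof (induction m)
  case 0 then show ?case by simp
next
  case (Suc m)
  have Q: "0 \<le> Q" using assms by simp
  have "x^Suc m - y^Suc m = x * (x^m - y^m) + y^m * (x - y)" by (simp add: algebra_simps)
  then have "\<bar>x^Suc m - y^Suc m\<bar> \<le> \<bar>x\<bar> * \<bar>x^m - y^m\<bar> + \<bar>y\<bar>^m * \<bar>x - y\<bar>"
    by (metis abs_mult abs_triangle_ineq power_abs)
  also have "\<dots> \<le> Q * (real m * Q^(m-1) * \<bar>x - y\<bar>) + Q^m * \<bar>x - y\<bar>"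
    using Suc assms Q by (intro add_mono mult_mono power_mono) auto
  also have "\<dots> = real (Suc m) * Q^(Suc m - 1) * \<bar>x - y\<bar>"
    by (cases m) (auto simp: algebra_simps)
  finally show ?case .
qed

lemma ss_close: assumes "1 \<le> n" "0 \<le> z"
  shows "\<bar>ss n z - z^2/2\<bar> \<le> z^4 / (24 * (real n)^2)"
proof -
  have n: "real n > 0" using assms by simp
  have "ss n z - z^2/2 = (real n)^2 * ((1 - cos (z / real n)) - (z / real n)^2 / 2)"
    using n by (simp add: ss_def field_simps)
  then have "\<bar>ss n z - z^2/2\<bar> = (real n)^2 * \<bar>(1 - cos (z / real n)) - (z / real n)^2 / 2\<bar>"
    by (simp add: abs_mult)
  also have "\<dots> \<le> (real n)^2 * ((z / real n)^4 / 24)"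
    using cos_taylor4[of "z / real n"] assms by (intro mult_left_mono) auto
  also have "\<dots> = z^4 / (24 * (real n)^2)" using n by (simp add: field_simps power_divide)
  finally show ?thesis .
qed

lemma ee_tendsto: "(\<lambda>n. ee n k m) \<longlonglongrightarrow> 1"
proof -
  have "(\<lambda>n. ee n k m) \<longlonglongrightarrow> (\<Prod>i<m. 1 - (real (k+i))^2 * 0)"
    unfolding ee_def divide_inverse
    by (intro tendsto_intros tendsto_inverse_0_at_top filterlim_pow_at_top filterlim_real_sequentially) auto
  then show ?thesis by simp
qed

lemma uniform_MH:
  assumes "0 \<le> Z" "0 < \<epsilon>"
  shows "eventually (\<lambda>n. \<forall>z\<in>{0..Z}. \<bar>NN n k z - LL k z\<bar> < \<epsilon>) sequentially"
proof -
  define G where "G = sequentially \<times>\<^sub>F principal {0..Z}"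
  define Q where "Q = Z^2/2 + Z^4/24"
  have Q0: "0 \<le> Q" unfolding Q_def by simp
  define a where "a m p = tt (fst p) k m (snd p) - aa k m * ((snd p)^2)^m" for m p
  define good where "good p = (max 1 k \<le> fst p \<and> snd p \<in> {0..Z})" for p :: "nat \<times> real"
  have Gnb: "G \<noteq> bot" unfolding G_def prod_filter_eq_bot using assms by (simp add: principal_eq_bot_iff)
  have evgood: "eventually good G"
    unfolding G_def eventually_prod_filter good_def
    by (intro exI[of _ "\<lambda>n. max 1 k \<le> n"] exI[of _ "\<lambda>z. z \<in> {0..Z}"])
       (auto simp: eventually_principal intro: eventually_mono[OF eventually_ge_at_top[of "max 1 k"]])
  have aa_eq: "aa k m * (z^2)^m = cc k m * (- (z^2/2))^m / fact m" for m z
    by (simp add: aa_def power_mult_distrib[symmetric])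
  have sbd: "\<bar>ss n z\<bar> \<le> Q" "\<bar>z^2/2\<bar> \<le> Q" "\<bar>ss n z - z^2/2\<bar> \<le> Z^4 / (24 * (real n)^2)"
    if "1 \<le> n" "z \<in> {0..Z}" for n z
  proof -
    have z2: "z^2 \<le> Z^2" "z^4 \<le> Z^4" using that by (auto intro!: power_mono)
    have n1: "(real n)^2 \<ge> 1" using that by simp
    have c: "\<bar>ss n z - z^2/2\<bar> \<le> z^4 / (24 * (real n)^2)" using ss_close that by simp
    also have "\<dots> \<le> Z^4 / (24 * (real n)^2)" using z2 n1 by (intro divide_right_mono) auto
    finally show "\<bar>ss n z - z^2/2\<bar> \<le> Z^4 / (24 * (real n)^2)" .
    have "Z^4 / (24 * (real n)^2) \<le> Z^4 / 24" using n1 that by (intro divide_left_mono) auto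
    then have e: "\<bar>ss n z - z^2/2\<bar> \<le> Z^4/24"
      using \<open>\<bar>ss n z - z^2/2\<bar> \<le> Z^4 / (24 * (real n)^2)\<close> by linarith
    have "0 \<le> z^2" "0 \<le> Z^2" "0 \<le> Z^4" by simp_all
    then show "\<bar>ss n z\<bar> \<le> Q" "\<bar>z^2/2\<bar> \<le> Q"
      using e z2 unfolding Q_def abs_le_iff by linarith+
  qed
  have tbd: "\<bar>cc k m * x^m / fact m\<bar> \<le> Q^m / fact m" if "\<bar>x\<bar> \<le> Q" for x m
  proof -
    have "\<bar>cc k m * x^m / fact m\<bar> = cc k m * \<bar>x\<bar>^m / fact m" using cc_bound[of k m]
      by (simp add: abs_mult power_abs)
    also have "\<dots> \<le> 1 * Q^m / fact m" using cc_bound[of k m] that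
      by (intro divide_right_mono mult_mono power_mono) auto
    finally show ?thesis by simp
  qed
  have abound: "\<bar>a m p\<bar> \<le> 2 * (inverse (fact m) * Q^m)" if "good p" for m p
  proof -
    obtain n z where p: "p = (n, z)" by (cases p)
    have nz: "1 \<le> n" "k \<le> n" "z \<in> {0..Z}" using that by (auto simp: good_def p)
    have "\<bar>tt n k m z\<bar> = \<bar>ee n k m\<bar> * \<bar>cc k m * (- ss n z)^m / fact m\<bar>"
      by (simp add: tt_def abs_mult)
    also have "\<dots> \<le> 1 * (Q^m / fact m)"
      using ee_bound[OF nz(1,2)] tbd[of "- ss n z" m] sbd[OF nz(1,3)] by (intro mult_mono) auto
    finally have t1: "\<bar>tt n k m z\<bar> \<le> Q^m / fact m" by simp
    have t2: "\<bar>aa k m * (z^2)^m\<bar> \<le> Q^m / fact m"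
      unfolding aa_eq using tbd[of "- (z^2/2)" m] sbd[OF nz(1,3)] by auto
    have "\<bar>tt n k m z - aa k m * (z^2)^m\<bar> \<le> Q^m / fact m + Q^m / fact m"
      using t1 t2 by arith
    then show ?thesis unfolding a_def p by (simp add: field_simps)
  qed
  have alim: "((\<lambda>p. a m p) \<longlongrightarrow> 0) G" for m
  proof (rule Lim_null_comparison)
    define B where "B n = \<bar>ee n k m - 1\<bar> * Q^m + real m * Q^(m-1) * (Z^4 / (24 * (real n)^2))" for n
    show "eventually (\<lambda>p. norm (a m p) \<le> B (fst p)) G"
      using evgood
    proof eventually_elim
      case (elim p)
      obtain n z where p: "p = (n, z)" by (cases p)
      have nz: "1 \<le> n" "k \<le> n" "z \<in> {0..Z}" using elim by (auto simp: good_def p)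
      have cf: "cc k m / fact m \<le> 1" "0 \<le> cc k m / fact m"
        using cc_bound[of k m] by (auto simp: divide_le_eq_1 intro: order_trans[OF _ fact_ge_1])
      define W where "W = (ee n k m - 1) * (- ss n z)^m + ((- ss n z)^m - (- (z^2/2))^m)"
      have aeq: "a m p = cc k m / fact m * W"
        unfolding a_def p aa_eq W_def by (simp add: tt_def field_simps)
      have Wb: "\<bar>W\<bar> \<le> \<bar>ee n k m - 1\<bar> * \<bar>- ss n z\<bar>^m + \<bar>(- ss n z)^m - (- (z^2/2))^m\<bar>"
        unfolding W_def by (metis abs_mult abs_triangle_ineq power_abs)
      have "\<bar>a m p\<bar> = cc k m / fact m * \<bar>W\<bar>" using cc_bound[of k m] by (simp add: aeq abs_mult)
      also have "\<dots> \<le> 1 * \<bar>W\<bar>" using cf by (intro mult_right_mono) auto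
      finally have "\<bar>a m p\<bar> \<le> \<bar>ee n k m - 1\<bar> * \<bar>- ss n z\<bar>^m + \<bar>(- ss n z)^m - (- (z^2/2))^m\<bar>"
        using Wb by simp
      also have "\<dots> \<le> \<bar>ee n k m - 1\<bar> * Q^m + real m * Q^(m-1) * \<bar>(- ss n z) - (- (z^2/2))\<bar>"
        using sbd[OF nz(1,3)] pow_diff_bound[of "- ss n z" Q "- (z^2/2)" m]
        by (intro add_mono mult_left_mono power_mono) auto
      also have "\<dots> \<le> B n" unfolding B_def
        using sbd(3)[OF nz(1,3)] Q0 by (intro add_mono mult_left_mono) (auto simp: abs_minus_commute)
      finally show ?case by (simp add: p)
    qed
    have "(B \<longlongrightarrow> \<bar>1 - 1\<bar> * Q^m + real m * Q^(m-1) * (Z^4 * 0)) sequentially"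
      unfolding B_def divide_inverse
      by (intro tendsto_intros ee_tendsto tendsto_inverse_0_at_top filterlim_tendsto_pos_mult_at_top
           filterlim_pow_at_top filterlim_real_sequentially) auto
    then have Bl: "(B \<longlongrightarrow> 0) sequentially" by simp
    show "((\<lambda>p. B (fst p)) \<longlongrightarrow> 0) G"
      unfolding G_def by (rule filterlim_compose[OF Bl filterlim_fst])
  qed
  have bound: "eventually (\<lambda>(m, p). norm (a m p) \<le> 2 * (inverse (fact m) * Q^m)) (at_top \<times>\<^sub>F G)"
    unfolding eventually_prod_filter
    by (intro exI[of _ "\<lambda>_. True"] exI[of _ good]) (use evgood abound in auto)
  have summ: "summable (\<lambda>m. 2 * (inverse (fact m) * Q^m))"
    by (intro summable_mult summable_exp)
  from tannerys_theorem[OF alim bound summ Gnb]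
  have lim: "((\<lambda>p. \<Sum>m. a m p) \<longlongrightarrow> (\<Sum>m. 0)) G" by blast
  have "eventually (\<lambda>p. dist (\<Sum>m. a m p) 0 < \<epsilon>) G"
    using tendstoD[OF lim assms(2)] by simp
  with evgood have "eventually (\<lambda>p. \<bar>NN (fst p) k (snd p) - LL k (snd p)\<bar> < \<epsilon>) G"
  proof eventually_elim
    case (elim p)
    obtain n z where p: "p = (n, z)" by (cases p)
    have nz: "1 \<le> n" "k \<le> n" using elim by (auto simp: good_def p)
    have "(\<Sum>m. a m p) = NN n k z - LL k z"
      unfolding a_def p NN_suminf(1)[OF nz] LL_def PP_def
      by (simp add: suminf_diff[OF NN_suminf(2)[OF nz] aa_summable])
    then show ?case using elim by (simp add: p dist_real_def)
  qed
  then show ?thesis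
    unfolding G_def eventually_prod_filter eventually_principal
    by (auto elim!: eventually_mono)
qed


lemma cc_Suc_front: "cc k (Suc m) = cc (Suc k) m / (2 * real k + 1)"
  unfolding cc_def prod.lessThan_Suc_shift by simp

lemma cc_Suc_back: "cc k (Suc m) = cc k m / (2 * real (k+m) + 1)"
  unfolding cc_def by simp

lemma PP_0: "PP k 0 = 1"
  unfolding PP_def powser_zero by (simp add: aa_def cc_def)

lemma LL_0: "LL k 0 = 1"
  by (simp add: LL_def PP_0)

lemma PP_cont: "isCont (PP k) w"
proof -
  have "isCont (\<lambda>w. \<Sum>m. aa k m * w^m) w"
    by (rule isCont_powser[of _ "\<bar>w\<bar> + 1"]) (auto intro: aa_summable)
  then show ?thesis unfolding PP_def[abs_def] .
qed

lemma LL_cont: "isCont (LL k) z"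
  unfolding LL_def[abs_def] by (rule isCont_o2[OF _ PP_cont]) simp

lemma LL_continuous_on: "continuous_on S (LL k)"
  using LL_cont by (simp add: continuous_at_imp_continuous_on)

lemma diffs_aa: "diffs (aa k) m = - aa (Suc k) m / (2 * (2 * real k + 1))"
proof -
  have "diffs (aa k) m = (real (Suc m) / fact (Suc m)) * cc k (Suc m) * (-1/2)^(Suc m)"
    by (simp add: diffs_def aa_def)
  also have "real (Suc m) / fact (Suc m) = 1 / (fact m :: real)"
    by (simp del: of_nat_Suc)
  finally show ?thesis unfolding cc_Suc_front aa_def by (simp add: field_simps)
qed

lemma PP_deriv: "DERIV (PP k) w :> - PP (Suc k) w / (2 * (2 * real k + 1))"
proof -
  have "((\<lambda>w. \<Sum>m. aa k m * w^m) has_field_derivative (\<Sum>m. diffs (aa k) m * w^m)) (at w)"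
    by (rule termdiffs_strong_converges_everywhere) (rule aa_summable)
  also have "(\<Sum>m. diffs (aa k) m * w^m) = (\<Sum>m. (-1 / (2 * (2 * real k + 1))) * (aa (Suc k) m * w^m))"
    by (intro suminf_cong) (simp add: diffs_aa)
  also have "\<dots> = - PP (Suc k) w / (2 * (2 * real k + 1))"
    unfolding PP_def by (subst suminf_mult[OF aa_summable]) simp
  finally show ?thesis unfolding PP_def[abs_def] .
qed

lemma LL_deriv: "DERIV (LL k) z :> - PP (Suc k) (z^2) / (2 * (2 * real k + 1)) * (2 * z)"
  unfolding LL_def[abs_def]
  by (rule DERIV_chain2[OF PP_deriv]) (auto intro!: derivative_eq_intros)

lemma aa_rec: "(2 * real k + 1) * (aa k (Suc m) - aa (Suc k) (Suc m)) = - aa (Suc (Suc k)) m / (2 * real k + 3)"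
proof -
  have a: "cc k (Suc m) = cc (Suc k) m / (2 * real k + 1)" by (rule cc_Suc_front)
  have b: "cc (Suc k) (Suc m) = cc (Suc k) m / (2 * real k + 2 * real m + 3)"
    unfolding cc_Suc_back by (simp add: algebra_simps)
  have c: "cc (Suc k) (Suc m) = cc (Suc (Suc k)) m / (2 * real k + 3)"
    unfolding cc_Suc_front by (simp add: algebra_simps)
  have d: "cc (Suc k) m = cc (Suc (Suc k)) m * (2 * real k + 2 * real m + 3) / (2 * real k + 3)"
    using b c by (simp add: field_simps)
  define C where "C = cc (Suc (Suc k)) m"
  define p where "p = ((-1/2)::real)^m"
  define f where "f = (fact m :: real)"
  have f0: "f > 0" by (simp add: f_def)
  have k0: "0 \<le> real k" "0 \<le> real m" by simp_all
  have e1: "aa k (Suc m) = C * (2*real k + 2*real m + 3) * (-1/2) * p / ((2*real k+3)*(2*real k+1)*(real m + 1)*f)"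
    unfolding aa_def a d C_def p_def f_def by (simp add: field_simps)
  have e2: "aa (Suc k) (Suc m) = C * (-1/2) * p / ((2*real k+3)*(real m + 1)*f)"
    unfolding aa_def c C_def p_def f_def by (simp add: field_simps)
  have e3: "aa (Suc (Suc k)) m = C * p / f"
    unfolding aa_def C_def p_def f_def by simp
  have aux: "K * (C*(K + 2*Mp)*(-1/2)*p/(A*K*Mp*f) - C*(-1/2)*p/(A*Mp*f)) = - (C*p/f)/A"
    if "K > 0" "A > 0" "Mp > 0" "f > 0" for K A Mp f :: real
    using that by (simp add: field_simps)
  have "(2*real k + 1) * (aa k (Suc m) - aa (Suc k) (Suc m)) =
    (2*real k + 1) * (C*((2*real k + 1) + 2*(real m + 1))*(-1/2)*p/((2*real k+3)*(2*real k+1)*(real m + 1)*f)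
      - C*(-1/2)*p/((2*real k+3)*(real m + 1)*f))"
    unfolding e1 e2 by (simp add: algebra_simps)
  also have "\<dots> = - (C*p/f)/(2*real k+3)"
    by (rule aux) (use f0 in auto)
  finally show ?thesis unfolding e3 .
qed

lemma PP_rec: "(2 * real k + 1) * (PP k w - PP (Suc k) w) + w * PP (Suc (Suc k)) w / (2 * real k + 3) = 0"
proof -
  define b where "b m = (2 * real k + 1) * (aa k m - aa (Suc k) m) * w^m" for m
  have sb: "summable b" unfolding b_def
    using summable_mult[OF summable_diff[OF aa_summable[of k w] aa_summable[of "Suc k" w]], of "2 * real k + 1"]
    by (simp add: algebra_simps)
  have b0: "b 0 = 0" by (simp add: b_def aa_def cc_def)
  have "suminf b = (\<Sum>m. (2 * real k + 1) * (aa k m * w^m - aa (Suc k) m * w^m))"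
    unfolding b_def by (intro suminf_cong) (simp add: algebra_simps)
  also have "\<dots> = (2 * real k + 1) * (\<Sum>m. aa k m * w^m - aa (Suc k) m * w^m)"
    by (rule suminf_mult[OF summable_diff[OF aa_summable aa_summable]])
  also have "\<dots> = (2 * real k + 1) * (PP k w - PP (Suc k) w)"
    unfolding PP_def by (simp add: suminf_diff[OF aa_summable aa_summable])
  finally have "(2 * real k + 1) * (PP k w - PP (Suc k) w) = suminf b" ..
  also have "\<dots> = (\<Sum>m. b (Suc m))" using suminf_split_head[OF sb] b0 by simp
  also have "\<dots> = (\<Sum>m. w * (aa (Suc (Suc k)) m * w^m) / (- (2 * real k + 3)))"
  proof (rule suminf_cong)
    fix m
    show "b (Suc m) = w * (aa (Suc (Suc k)) m * w^m) / (- (2 * real k + 3))"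
    proof -
      have e: "b (Suc m) = ((2 * real k + 1) * (aa k (Suc m) - aa (Suc k) (Suc m))) * w^(Suc m)"
        by (simp add: b_def)
      show ?thesis unfolding e aa_rec by (simp add: field_simps)
    qed
  qed
  also have "\<dots> = w * PP (Suc (Suc k)) w / (- (2 * real k + 3))"
    unfolding PP_def by (simp add: suminf_divide summable_mult aa_summable suminf_mult)
  finally show ?thesis by (simp add: field_simps)
qed

lemma PP_lim1: "(\<lambda>K. PP K w) \<longlonglongrightarrow> 1"
proof -
  define b where "b m = (if m = 0 then 1 else (0::real))" for m :: nat
  have lim: "(\<lambda>K. aa K m * w^m) \<longlonglongrightarrow> b m" for m
  proof (cases m)
    case 0 then show ?thesis by (simp add: b_def aa_def cc_def)
  next
    case (Suc m')
    have "(\<lambda>K. aa K m * w^m) \<longlonglongrightarrow> 0"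
    proof (rule Lim_null_comparison)
      show "eventually (\<lambda>K. norm (aa K m * w^m) \<le> \<bar>w\<bar>^m * inverse (real (Suc K))) sequentially"
      proof (intro always_eventually allI)
        fix K
        have c1: "cc K m \<le> 1 / (2 * real K + 1)"
          unfolding Suc cc_Suc_front using cc_bound[of "Suc K" m'] by (simp add: divide_right_mono)
        have f1: "1 \<le> (fact m :: real)" by simp
        have "norm (aa K m * w^m) = cc K m * (1/2)^m / fact m * \<bar>w\<bar>^m"
          using cc_bound[of K m] by (simp add: aa_def abs_mult power_abs)
        also have "\<dots> \<le> (1 / (2 * real K + 1)) * 1 / 1 * \<bar>w\<bar>^m"
          using c1 f1 cc_bound[of K m]
          by (intro mult_right_mono divide_mono mult_mono power_le_one) auto
        also have "\<dots> \<le> \<bar>w\<bar>^m * inverse (real (Suc K))"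
          by (simp add: field_simps)
        finally show "norm (aa K m * w^m) \<le> \<bar>w\<bar>^m * inverse (real (Suc K))" .
      qed
      show "(\<lambda>K. \<bar>w\<bar>^m * inverse (real (Suc K))) \<longlonglongrightarrow> 0"
        by (intro tendsto_mult_right_zero LIMSEQ_inverse_real_of_nat)
    qed
    then show ?thesis by (simp add: b_def Suc)
  qed
  have bound: "eventually (\<lambda>(m, K). norm (aa K m * w^m) \<le> inverse (fact m) * (\<bar>w\<bar>/2)^m) (at_top \<times>\<^sub>F sequentially)"
    by (intro always_eventually) (use aa_bound in auto)
  from tannerys_theorem[OF lim bound summable_exp]
  have "(\<lambda>K. \<Sum>m. aa K m * w^m) \<longlonglongrightarrow> suminf b" by simp
  moreover have "suminf b = 1"
    using sums_single[of 0 "\<lambda>_. 1::real"] unfolding b_def by (simp add: sums_iff)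
  ultimately show ?thesis unfolding PP_def by simp
qed

lemma no_double_zero: assumes "w \<noteq> 0" "PP k w = 0" "PP (Suc k) w = 0" shows False
proof -
  have all: "PP (k+i) w = 0 \<and> PP (Suc (k+i)) w = 0" for i
  proof (induction i)
    case 0 then show ?case using assms by simp
  next
    case (Suc i)
    have "(2 * real (k+i) + 1) * (PP (k+i) w - PP (Suc (k+i)) w) + w * PP (Suc (Suc (k+i))) w / (2 * real (k+i) + 3) = 0"
      by (rule PP_rec)
    then have "w * PP (Suc (Suc (k+i))) w / (2 * real (k+i) + 3) = 0" using Suc by simp
    then have "PP (Suc (Suc (k+i))) w = 0" using assms(1) by simp
    then show ?case using Suc by simp
  qed
  have "eventually (\<lambda>K. PP K w = 0) sequentially"
    using eventually_ge_at_top[of k]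
  proof eventually_elim
    case (elim K)
    then have "K = k + (K - k)" by simp
    then show ?case using all[of "K - k"] by metis
  qed
  then have "(\<lambda>K. PP K w) \<longlonglongrightarrow> 0" by (rule tendsto_eventually)
  from LIMSEQ_unique[OF this PP_lim1] show False by simp
qed

lemma besselJ_LL:
  assumes "z > 0"
  shows "besselJ (real k - 1/2) z = (z/2) powr (real k - 1/2) / Gamma (real k + 1/2) * LL k z"
proof -
  define g where "g = real k + 1/2"
  have g0: "g > 0" by (simp add: g_def)
  have gnp: "g \<notin> \<int>\<^sub>\<le>\<^sub>0" using g0 by auto
  define P where "P = (z/2) powr (real k - 1/2)"
  have Gpos: "Gamma g > 0" using g0 by (rule Gamma_real_pos)
  have trm: "(-1)^m / (fact m * Gamma (real m + (real k - 1/2) + 1)) * (z/2) powr (2 * real m + (real k - 1/2))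
      = P / Gamma g * (aa k m * (z^2)^m)" for m
  proof -
    have "pochhammer g m * Gamma g = Gamma (g + real m)"
      using pochhammer_Gamma[OF gnp, of m] Gpos by simp
    then have G: "Gamma (real m + (real k - 1/2) + 1) = pochhammer g m * Gamma g"
      by (simp add: g_def algebra_simps)
    have pw: "(z/2) powr (2 * real m + (real k - 1/2)) = (z/2)^(2*m) * P"
      unfolding P_def using assms by (simp add: powr_add powr_realpow[symmetric] mult.commute)
    have cc: "cc k m = 1 / (2^m * pochhammer g m)"
    proof -
      have "cc k m = (\<Prod>i<m. 1 / (2 * (g + real i)))"
        unfolding cc_def g_def by (intro prod.cong) (auto simp: algebra_simps)
      also have "\<dots> = 1 / (\<Prod>i<m. 2 * (g + real i))" by (simp add: prod_dividef)
      also have "(\<Prod>i<m. 2 * (g + real i)) = 2^m * (\<Prod>i<m. g + real i)"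
        unfolding prod.distrib by simp
      also have "(\<Prod>i<m. g + real i) = pochhammer g m"
        by (simp add: pochhammer_prod atLeast0LessThan)
      finally show ?thesis .
    qed
    have pp: "pochhammer g m > 0" using g0 by (simp add: pochhammer_pos)
    have e1: "(z/2)^(2*m) = (z^2)^m / (2^m * 2^m)"
      by (simp add: power_mult power_divide power_mult_distrib[symmetric])
    have e2: "((-1/2)::real)^m = (-1)^m / 2^m"
      by (metis minus_divide_left power_divide)
    have aux: "S / (f * (p * G)) * (X / (T * T) * P) = P / G * (1 / (T * p) * (S / T) / f * X)"
      if "p > 0" "G > 0" "T > 0" "f > 0" for S f p G X T P :: real
      using that by (simp add: field_simps)
    show ?thesis unfolding G pw aa_def cc e1 e2
      by (rule aux) (use pp Gpos in auto)
  qed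
  have "besselJ (real k - 1/2) z = (\<Sum>m. P / Gamma g * (aa k m * (z^2)^m))"
    unfolding besselJ_def trm ..
  also have "\<dots> = P / Gamma g * LL k z"
    unfolding LL_def PP_def by (rule suminf_mult[OF aa_summable])
  finally show ?thesis unfolding P_def g_def .
qed


lemma cos_odd_half: "cos (real (2*j+1) * pi / 2) = 0"
proof -
  have e: "real (2*j+1) * pi / 2 = real j * pi + pi/2" by (simp add: field_simps)
  show ?thesis unfolding e cos_add by simp
qed

lemma cheb_deriv_zero_exists:
  assumes "k + 2 \<le> n"
  shows "\<exists>x. cos (real (2*k+3) * pi / (2 * real n)) \<le> x \<and> x \<le> 1 \<and> poly (cheb_deriv n (k+1)) x = 0"
proof -
  have n0: "real n > 0" using assms by simp
  define th where "th i = real (2*(k+1-i)+1) * pi / (2 * real n)" for i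
  define a where "a i = cos (th i)" for i
  have th_le: "th i \<le> pi" if "i \<le> k+1" for i
  proof -
    have "real (2*(k+1-i)+1) \<le> 2 * real n" using assms that by simp
    then have "real (2*(k+1-i)+1) * pi \<le> 2 * real n * pi" by (simp add: mult_right_mono)
    then show ?thesis unfolding th_def using n0 by (simp add: field_simps)
  qed
  have th_ge: "0 \<le> th i" for i unfolding th_def using n0 by simp
  have mono: "\<forall>i<k+1. a i < a (Suc i)"
  proof (intro allI impI)
    fix i assume i: "i < k+1"
    have "real (2*(k+1-Suc i)+1) < real (2*(k+1-i)+1)" using i by simp
    then have "th (Suc i) < th i" unfolding th_def using n0
      by (intro divide_strict_right_mono mult_strict_right_mono) auto
    then show "a i < a (Suc i)" unfolding a_def
      by (intro cos_monotone_0_pi th_ge th_le) (use i in auto)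
  qed
  have zeros: "\<forall>i\<le>k+1. poly (cheb n) (a i) = 0"
  proof (intro allI impI)
    fix i assume "i \<le> k+1"
    have e: "real n * th i = real (2*(k+1-i)+1) * pi / 2" unfolding th_def using n0 by (simp add: field_simps)
    show "poly (cheb n) (a i) = 0" unfolding a_def cheb_cos e by (rule cos_odd_half)
  qed
  from gen_rolle[OF mono zeros] obtain x where x: "a 0 \<le> x" "x \<le> a (k+1)"
    "poly ((pderiv ^^ (k+1)) (cheb n)) x = 0" by blast
  have "a 0 = cos (real (2*k+3) * pi / (2 * real n))" unfolding a_def th_def
    by (simp add: algebra_simps)
  moreover have "a (k+1) \<le> 1" unfolding a_def by simp
  ultimately show ?thesis using x unfolding cheb_deriv_def by auto
qed

lemma omega_props:
  assumes "k + 2 \<le> n"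
  shows "poly (cheb_deriv n (k+1)) (omega n k) = 0"
    "cos (real (2*k+3) * pi / (2 * real n)) \<le> omega n k"
    "omega n k < 1"
    "\<And>x. poly (cheb_deriv n (k+1)) x = 0 \<Longrightarrow> x \<le> omega n k"
proof -
  define S where "S = {x. poly (cheb_deriv n (k+1)) x = 0}"
  have "poly (cheb_deriv n (k+1)) 1 > 0" using chebD_pos[of "k+1" n] assms by (simp add: chebD_def)
  then have "cheb_deriv n (k+1) \<noteq> 0" by auto
  then have fin: "finite S" unfolding S_def by (rule poly_roots_finite)
  obtain x0 where x0: "cos (real (2*k+3) * pi / (2 * real n)) \<le> x0" "poly (cheb_deriv n (k+1)) x0 = 0"
    using cheb_deriv_zero_exists[OF assms] by blast
  then have ne: "S \<noteq> {}" unfolding S_def by auto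
  have om: "omega n k = Max S" unfolding omega_def S_def by simp
  show z: "poly (cheb_deriv n (k+1)) (omega n k) = 0" using Max_in[OF fin ne] unfolding om S_def by simp
  show ub: "\<And>x. poly (cheb_deriv n (k+1)) x = 0 \<Longrightarrow> x \<le> omega n k"
    unfolding om using fin by (intro Max_ge) (auto simp: S_def)
  show "cos (real (2*k+3) * pi / (2 * real n)) \<le> omega n k" using ub[OF x0(2)] x0(1) by simp
  show "omega n k < 1"
  proof (rule ccontr)
    assume "\<not> omega n k < 1"
    then have "0 < poly (cheb_deriv n (k+1)) (omega n k)" using assms by (intro cheb_deriv_pos) auto
    then show False using z by simp
  qed
qed


definition zn :: "nat \<Rightarrow> nat \<Rightarrow> real" where
  "zn n k = real n * arccos (omega n k)"

lemma zn_props: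
  assumes "k + 2 \<le> n"
  shows "0 \<le> zn n k" "zn n k \<le> real (2*k+3) * pi / 2"
    "NN n (k+1) (zn n k) = 0" "tau n k = \<bar>NN n k (zn n k)\<bar>"
proof -
  have n0: "real n > 0" using assms by simp
  define B where "B = real (2*k+3) * pi / (2 * real n)"
  have B0: "0 \<le> B" unfolding B_def using n0 by simp
  have Bpi: "B \<le> pi"
  proof -
    have "real (2*k+3) \<le> 2 * real n" using assms by simp
    then have "real (2*k+3) * pi \<le> 2 * real n * pi" by (simp add: mult_right_mono)
    then show ?thesis unfolding B_def using n0 by (simp add: field_simps)
  qed
  note om = omega_props[OF assms]
  have om1: "-1 \<le> omega n k" using om(2)[folded B_def] cos_ge_minus_one[of B] by linarith
  have om2: "omega n k \<le> 1" using om(3) by simp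
  have ac: "0 \<le> arccos (omega n k)" "arccos (omega n k) \<le> pi" using arccos_bounded[OF om1 om2] by auto
  show "0 \<le> zn n k" unfolding zn_def using ac n0 by simp
  have "arccos (omega n k) \<le> arccos (cos B)"
    using om(2)[folded B_def] om2 by (intro arccos_le_arccos) auto
  also have "\<dots> = B" using B0 Bpi by (rule arccos_cos)
  finally have "real n * arccos (omega n k) \<le> real n * B" using n0 by simp
  moreover have "real n * B = real (2*k+3) * pi / 2" unfolding B_def using n0 by (simp add: field_simps)
  ultimately show "zn n k \<le> real (2*k+3) * pi / 2" unfolding zn_def by simp
  have cz: "cos (zn n k / real n) = omega n k" unfolding zn_def using n0 om1 om2 by (simp add: cos_arccos)
  show "NN n (k+1) (zn n k) = 0" unfolding NN_def cz om(1) by simp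
  have pos: "chebD n k > 0" using assms by (intro chebD_pos) simp
  show "tau n k = \<bar>NN n k (zn n k)\<bar>"
    unfolding tau_def NN_def cz using pos by (simp add: chebD_def abs_divide)
qed

lemma LL_pos_upto:
  assumes "\<forall>x. 0 < x \<and> x \<le> b \<longrightarrow> LL K x \<noteq> 0" "0 \<le> y" "y \<le> b"
  shows "LL K y > 0"
proof (rule ccontr)
  assume "\<not> LL K y > 0"
  then have y0: "LL K y \<le> 0" by simp
  have "\<exists>x. 0 \<le> x \<and> x \<le> y \<and> LL K x = 0"
    by (rule IVT2') (use y0 assms(2) LL_0 LL_continuous_on in auto)
  then obtain x where x: "0 \<le> x" "x \<le> y" "LL K x = 0" by blast
  have "x \<noteq> 0" using x(3) LL_0 by auto
  then show False using assms(1) x assms(3) by auto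
qed

lemma eventually_uniform_pos:
  assumes "0 \<le> a" "\<forall>x. 0 < x \<and> x \<le> a \<longrightarrow> LL K x \<noteq> 0"
  shows "eventually (\<lambda>n. \<forall>z\<in>{0..a}. NN n K z > 0) sequentially"
proof -
  obtain x0 where x0: "x0 \<in> {0..a}" "\<forall>y\<in>{0..a}. LL K x0 \<le> LL K y"
    using continuous_attains_inf[of "{0..a}" "LL K"] assms(1) LL_continuous_on by auto
  have m0: "LL K x0 > 0" using LL_pos_upto[OF assms(2)] x0(1) by auto
  show ?thesis using uniform_MH[OF assms(1) m0, of K]
  proof eventually_elim
    case (elim n)
    show ?case
    proof
      fix z assume z: "z \<in> {0..a}"
      have "\<bar>NN n K z - LL K z\<bar> < LL K x0" using elim z by blast
      moreover have "LL K x0 \<le> LL K z" using x0(2) z by blast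
      ultimately show "NN n K z > 0" by linarith
    qed
  qed
qed

lemma exists_zero:
  "\<exists>z. 0 < z \<and> z \<le> real (2*k+3) * pi / 2 \<and> LL (k+1) z = 0"
proof (rule ccontr)
  define B where "B = real (2*k+3) * pi / 2"
  assume "\<not> (\<exists>z. 0 < z \<and> z \<le> real (2*k+3) * pi / 2 \<and> LL (k+1) z = 0)"
  then have H: "\<forall>x. 0 < x \<and> x \<le> B \<longrightarrow> LL (k+1) x \<noteq> 0" unfolding B_def by auto
  have B0: "0 \<le> B" unfolding B_def by simp
  have "eventually (\<lambda>n. (\<forall>z\<in>{0..B}. NN n (k+1) z > 0) \<and> k + 2 \<le> n) sequentially"
    using eventually_uniform_pos[OF B0 H] eventually_ge_at_top[of "k+2"] by (rule eventually_conj)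
  then obtain N where N: "\<And>n. n \<ge> N \<Longrightarrow> (\<forall>z\<in>{0..B}. NN n (k+1) z > 0) \<and> k + 2 \<le> n"
    unfolding eventually_sequentially by blast
  have n: "\<forall>z\<in>{0..B}. NN N (k+1) z > 0" "k + 2 \<le> N" using N[of N] by auto
  have "zn N k \<in> {0..B}" using zn_props[OF n(2)] unfolding B_def by auto
  then have "NN N (k+1) (zn N k) > 0" using n(1) by blast
  then show False using zn_props(3)[OF n(2)] by simp
qed

lemma first_zero:
  obtains j where "0 < j" "LL (k+1) j = 0" "\<And>y. 0 < y \<Longrightarrow> y < j \<Longrightarrow> LL (k+1) y \<noteq> 0"
proof -
  define B where "B = real (2*k+3) * pi / 2"
  define S where "S = {0..B} \<inter> {z. LL (k+1) z = 0}"
  have cl: "closed {z. LL (k+1) z = 0}"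
    by (rule closed_Collect_eq) (auto intro: LL_continuous_on)
  have cS: "compact S" unfolding S_def by (rule compact_Int_closed[OF compact_Icc cl])
  obtain z0 where z0: "0 < z0" "z0 \<le> B" "LL (k+1) z0 = 0" using exists_zero[of k] unfolding B_def by blast
  then have "z0 \<in> S" unfolding S_def by simp
  then have neS: "S \<noteq> {}" by blast
  obtain j where j: "j \<in> S" "\<forall>y\<in>S. j \<le> y"
    using continuous_attains_inf[OF cS neS, of "\<lambda>x. x"] by (auto intro: continuous_on_id)
  have "j \<noteq> 0" using j(1) LL_0 unfolding S_def by auto
  then have "0 < j" using j(1) unfolding S_def by auto
  moreover have "LL (k+1) j = 0" using j(1) unfolding S_def by auto
  moreover have "LL (k+1) y \<noteq> 0" if "0 < y" "y < j" for y
  proof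
    assume "LL (k+1) y = 0"
    then have "y \<in> S" using that j(1) unfolding S_def by auto
    then show False using j(2) that by force
  qed
  ultimately show ?thesis using that by blast
qed

lemma sign_change:
  assumes j: "0 < j" "LL (k+1) j = 0" "\<And>y. 0 < y \<Longrightarrow> y < j \<Longrightarrow> LL (k+1) y \<noteq> 0"
    and d: "0 < \<delta>"
  shows "\<exists>z. j < z \<and> z < j + \<delta> \<and> LL (k+1) z < 0"
proof (rule ccontr)
  assume "\<not> (\<exists>z. j < z \<and> z < j + \<delta> \<and> LL (k+1) z < 0)"
  then have H: "\<And>z. j < z \<Longrightarrow> z < j + \<delta> \<Longrightarrow> LL (k+1) z \<ge> 0" by force
  define dd where "dd = min \<delta> j"
  have dd0: "0 < dd" unfolding dd_def using d j(1) by simp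
  have lm: "\<forall>y. \<bar>j - y\<bar> < dd \<longrightarrow> LL (k+1) j \<le> LL (k+1) y"
  proof (intro allI impI)
    fix y assume y: "\<bar>j - y\<bar> < dd"
    consider "y < j" | "y = j" | "j < y" by linarith
    then show "LL (k+1) j \<le> LL (k+1) y"
    proof cases
      case 1
      have "0 < y" using y 1 unfolding dd_def by auto
      then have "LL (k+1) y > 0"
        using LL_pos_upto[of y "k+1" y] j(3) 1 by auto
      then show ?thesis using j(2) by simp
    next
      case 2 then show ?thesis by simp
    next
      case 3
      have "y < j + \<delta>" using y 3 unfolding dd_def by auto
      then show ?thesis using H[OF 3] j(2) by simp
    qed
  qed
  from DERIV_local_min[OF LL_deriv dd0 lm]
  have "PP (Suc (k+1)) (j^2) = 0" using j(1) by (simp add: field_simps add_pos_pos)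
  moreover have "PP (k+1) (j^2) = 0" using j(2) by (simp add: LL_def)
  moreover have "j^2 \<noteq> 0" using j(1) by simp
  ultimately show False using no_double_zero[of "j^2" "k+1"] by simp
qed

lemma zn_lim:
  assumes j: "0 < j" "LL (k+1) j = 0" "\<And>y. 0 < y \<Longrightarrow> y < j \<Longrightarrow> LL (k+1) y \<noteq> 0"
  shows "(\<lambda>n. zn n k) \<longlonglongrightarrow> j"
proof (rule order_tendstoI)
  fix a assume a: "a < j"
  show "eventually (\<lambda>n. a < zn n k) sequentially"
  proof (cases "a < 0")
    case True
    show ?thesis using eventually_ge_at_top[of "k+2"]
      by eventually_elim (use zn_props(1) True in force)
  next
    case False
    have H: "\<forall>x. 0 < x \<and> x \<le> a \<longrightarrow> LL (k+1) x \<noteq> 0" using j(3) a by force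
    show ?thesis using eventually_uniform_pos[of a "k+1"] H False eventually_ge_at_top[of "k+2"]
    proof -
      have "eventually (\<lambda>n. (\<forall>z\<in>{0..a}. NN n (k+1) z > 0) \<and> k + 2 \<le> n) sequentially"
        using eventually_uniform_pos[of a "k+1"] H False eventually_ge_at_top[of "k+2"]
        by (intro eventually_conj) auto
      then show ?thesis
      proof eventually_elim
        case (elim n)
        show ?case
        proof (rule ccontr)
          assume "\<not> a < zn n k"
          then have "zn n k \<in> {0..a}" using zn_props(1)[of k n] elim by auto
          then have "NN n (k+1) (zn n k) > 0" using elim by blast
          then show False using zn_props(3)[of k n] elim by simp
        qed
      qed
    qed
  qed
next
  fix a assume a: "j < a"
  obtain z' where z': "j < z'" "z' < a" "LL (k+1) z' < 0"
    using sign_change[OF j, of "a - j"] a by auto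
  have z'0: "0 \<le> z'" using z' j(1) by simp
  have "eventually (\<lambda>n. (\<forall>z\<in>{0..z'}. \<bar>NN n (k+1) z - LL (k+1) z\<bar> < - LL (k+1) z')
          \<and> k + 2 \<le> n \<and> nat \<lceil>z'\<rceil> \<le> n) sequentially"
    using uniform_MH[OF z'0, of "- LL (k+1) z'" "k+1"] z'(3) eventually_ge_at_top[of "k+2"]
      eventually_ge_at_top[of "nat \<lceil>z'\<rceil>"]
    by (intro eventually_conj) auto
  then show "eventually (\<lambda>n. zn n k < a) sequentially"
  proof eventually_elim
    case (elim n)
    have nk: "k + 2 \<le> n" using elim by simp
    have n0: "real n > 0" using nk by simp
    have zn': "z' \<le> real n" using elim by linarith
    have "NN n (k+1) z' < 0" using elim z'0 by force
    define x1 where "x1 = cos (z' / real n)"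
    define p where "p = cheb_deriv n (k+1)"
    have cpos: "chebD n (k+1) > 0" using nk by (intro chebD_pos) simp
    have p1: "poly p x1 < 0" using \<open>NN n (k+1) z' < 0\<close> cpos
      unfolding NN_def p_def x1_def by (simp add: divide_less_0_iff)
    have p2: "0 < poly p 1" using cpos unfolding p_def chebD_def by simp
    have "x1 \<noteq> 1" using p1 p2 by auto
    then have x1lt: "x1 < 1" unfolding x1_def using cos_le_one[of "z' / real n"] by linarith
    obtain x2 where x2: "x1 < x2" "x2 < 1" "poly p x2 = 0" using poly_IVT_pos[OF x1lt p1 p2] by blast
    have x2om: "x2 \<le> omega n k" using omega_props(4)[OF nk] x2(3) unfolding p_def by simp
    have om1: "omega n k \<le> 1" using omega_props(3)[OF nk] by simp
    have zpi: "z' / real n \<le> pi"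
    proof -
      have "z' / real n \<le> 1" using zn' n0 by simp
      then show ?thesis using pi_gt3 by linarith
    qed
    have "arccos (omega n k) \<le> arccos x1"
      using x2(1) x2om om1 unfolding x1_def by (intro arccos_le_arccos) auto
    also have "arccos x1 = z' / real n" unfolding x1_def using zpi z'0 n0 by (intro arccos_cos) auto
    finally have "real n * arccos (omega n k) \<le> real n * (z' / real n)"
      by (rule mult_left_mono) (use n0 in auto)
    then have "zn n k \<le> real n * (z' / real n)" unfolding zn_def .
    then show ?case using n0 z'(2) by simp
  qed
qed

theorem lemma6p1:
  fixes k :: nat
  assumes "k \<ge> 1"
  shows "(\<lambda>n. tau n k) \<longlonglongrightarrow>
           (let \<nu> = real k - 1 / 2 in
              Gamma (\<nu> + 1) * (first_pos_zero (\<nu> + 1) / 2) powr (- \<nu>)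
              * \<bar>besselJ \<nu> (first_pos_zero (\<nu> + 1))\<bar>)"
proof -
  obtain j where j: "0 < j" "LL (k+1) j = 0" "\<And>y. 0 < y \<Longrightarrow> y < j \<Longrightarrow> LL (k+1) y \<noteq> 0"
    using first_zero[of k] by blast
  have nu1: "real k - 1/2 + 1 = real (Suc k) - 1/2" by simp
  have bz: "besselJ (real k - 1/2 + 1) y = 0 \<longleftrightarrow> LL (k+1) y = 0" if "y > 0" for y
  proof -
    have "(y/2) powr (real (Suc k) - 1/2) > 0" using that by simp
    moreover have "Gamma (real (Suc k) + 1/2) > 0" by (intro Gamma_real_pos) simp
    moreover have gne: "Gamma (3/2 + real k) \<noteq> 0"
    proof -
      have "Gamma (3/2 + real k) > 0" by (intro Gamma_real_pos) simp
      then show ?thesis by linarith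
    qed
    ultimately show ?thesis unfolding nu1 besselJ_LL[OF that] by (simp add: gne)
  qed
  have fz: "first_pos_zero (real k - 1/2 + 1) = j"
    unfolding first_pos_zero_def
  proof (rule the_equality)
    show "0 < j \<and> besselJ (real k - 1/2 + 1) j = 0 \<and> (\<forall>y. 0 < y \<and> y < j \<longrightarrow> besselJ (real k - 1/2 + 1) y \<noteq> 0)"
      using j bz by auto
  next
    fix x assume x: "0 < x \<and> besselJ (real k - 1/2 + 1) x = 0 \<and> (\<forall>y. 0 < y \<and> y < x \<longrightarrow> besselJ (real k - 1/2 + 1) y \<noteq> 0)"
    have xz: "LL (k+1) x = 0" using x bz by auto
    show "x = j"
    proof (rule ccontr)
      assume "x \<noteq> j"
      then consider "x < j" | "j < x" by linarith
      then show False
      proof cases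
        case 1 then show False using j(3)[of x] x xz by auto
      next
        case 2 then show False using x j(1,2) bz[of j] by auto
      qed
    qed
  qed
  define B where "B = real (2*k+3) * pi / 2"
  have B0: "0 \<le> B" unfolding B_def by simp
  have zl: "(\<lambda>n. zn n k) \<longlonglongrightarrow> j" by (rule zn_lim[OF j])
  have d: "(\<lambda>n. NN n k (zn n k) - LL k (zn n k)) \<longlonglongrightarrow> 0"
  proof (rule tendstoI)
    fix e :: real assume e: "0 < e"
    have "eventually (\<lambda>n. (\<forall>z\<in>{0..B}. \<bar>NN n k z - LL k z\<bar> < e) \<and> k + 2 \<le> n) sequentially"
      using uniform_MH[OF B0 e, of k] eventually_ge_at_top[of "k+2"] by (rule eventually_conj)
    then show "eventually (\<lambda>n. dist (NN n k (zn n k) - LL k (zn n k)) 0 < e) sequentially"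
    proof eventually_elim
      case (elim n)
      have "zn n k \<in> {0..B}" using zn_props(1,2)[of k n] elim unfolding B_def by auto
      then show ?case using elim by (simp add: dist_real_def)
    qed
  qed
  have c: "(\<lambda>n. LL k (zn n k)) \<longlonglongrightarrow> LL k j"
    by (rule isCont_tendsto_compose[OF LL_cont zl])
  have "(\<lambda>n. (NN n k (zn n k) - LL k (zn n k)) + LL k (zn n k)) \<longlonglongrightarrow> 0 + LL k j"
    by (rule tendsto_add[OF d c])
  then have "(\<lambda>n. NN n k (zn n k)) \<longlonglongrightarrow> LL k j" by simp
  then have "(\<lambda>n. \<bar>NN n k (zn n k)\<bar>) \<longlonglongrightarrow> \<bar>LL k j\<bar>" by (rule tendsto_rabs)
  moreover have "eventually (\<lambda>n. \<bar>NN n k (zn n k)\<bar> = tau n k) sequentially"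
    using eventually_ge_at_top[of "k+2"] by eventually_elim (simp add: zn_props(4))
  ultimately have lim: "(\<lambda>n. tau n k) \<longlonglongrightarrow> \<bar>LL k j\<bar>" by (rule Lim_transform_eventually)
  have val: "(let \<nu> = real k - 1 / 2 in
              Gamma (\<nu> + 1) * (first_pos_zero (\<nu> + 1) / 2) powr (- \<nu>)
              * \<bar>besselJ \<nu> (first_pos_zero (\<nu> + 1))\<bar>) = \<bar>LL k j\<bar>"
  proof -
    define P where "P = (j/2) powr (real k - 1/2)"
    define P' where "P' = (j/2) powr (- (real k - 1/2))"
    define G where "G = Gamma (real k + 1/2)"
    have G0: "G > 0" unfolding G_def by (intro Gamma_real_pos) simp
    have P0: "P > 0" unfolding P_def using j(1) by simp
    have PP': "P' * P = 1" unfolding P_def P'_def using j(1) by (simp add: powr_add[symmetric])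
    have g1: "Gamma (real k - 1/2 + 1) = G" unfolding G_def by (simp add: algebra_simps)
    have "(let \<nu> = real k - 1 / 2 in
              Gamma (\<nu> + 1) * (first_pos_zero (\<nu> + 1) / 2) powr (- \<nu>)
              * \<bar>besselJ \<nu> (first_pos_zero (\<nu> + 1))\<bar>) = G * P' * \<bar>P / G * LL k j\<bar>"
      unfolding Let_def fz g1 besselJ_LL[OF j(1)] P_def P'_def G_def by simp
    also have "\<dots> = (P' * P) * \<bar>LL k j\<bar>" using G0 P0 by (simp add: abs_mult field_simps)
    finally show ?thesis using PP' by simp
  qed
  show ?thesis unfolding val by (rule lim)
qed

end
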